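(* There exist a Stackelberg game $(G,L,F)$ and an SCE-PA $\mathbf{x}=[x_\pi]\in\mathbf{X}^{SCE\text{-}PA}$ such that there is no SCE-PA $\mathbf{x}'=[x'_\pi]\in\mathbf{X}^{SCE\text{-}PA}$ with $x'_\varnothing=x_\varnothing$ and $x'_\pi=x'_{\pi'}$ for all $\pi,\pi'\in\Pi_L$ having the same set of entries.
   Context: A finite game is $G=(N,\{S_p\}_{p\in N},\{u_p\}_{p\in N})$ with players $N=\{1,\dots,n\}$, finite nonempty strategy sets $S_p$, and utilities $u_p:S\to\mathbb{R}$ on $S=\prod_{p\in N}S_p$; write $s=(s_p,s_{-p})$ with $s_{-p}\in S_{-p}=\prod_{q\neq p}S_q$. $\mathcal{X}=\Delta(S)$ is the set of probability distributions on $S$ and $u_p(x)=\sum_{s\in S}x(s)u_p(s)$ for $x\in\mathcal{X}$. For $P\subseteq N$, $\mathcal{X}^{CE}_P$ is the set of $x\in\mathcal{X}$ such that for every $p\in P$ and all $s_p\neq s_p'\in S_p$: $\sum_{s_{-p}\in S_{-p}} x(s_p,s_{-p})\,(u_p(s_p,s_{-p})-u_p(s_p',s_{-p}))\ge 0$; $\mathcal{X}^{CE}=\mathcal{X}^{CE}_N$ is the set of correlated equilibria of $G$. A Stackelberg game (SG) is a triple $(G,L,F)$ with $L\cup F=N$ and $L\cap F=\emptyset$ (leaders and followers). For $P\subseteq N$, $\Pi_P$ is the set of ordered subsets of $P$ (finite sequences of pairwise distinct elements of $P$, including the empty sequence $\varnothing$); for $\pi\in\Pi_P$ and $p\in P$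 not occurring in $\pi$, $\pi p$ is $\pi$ with $p$ appended; when used as a set, $\pi$ means its set of entries. $\mathbf{X}=\prod_{\pi\in\Pi_L}\mathcal{X}^{CE}_{\pi\cup F}$, with elements $\mathbf{x}=[x_\pi]_{\pi\in\Pi_L}$. For $\mathbf{x}\in\mathbf{X}$ and $\pi\in\Pi_L$, $x_\pi$ is stable if $u_p(x_\pi)\ge u_p(x_{\pi p})$ for all $p\in L\setminus\pi$; $\mathbf{x}$ is stable if $x_\varnothing$ is stable, and perfectly stable if $x_\pi$ is stable for every $\pi\in\Pi_L$; $\mathbf{X}^{S}$ and $\mathbf{X}^{PS}$ denote the sets of stable and perfectly stable elements of $\mathbf{X}$. For $\mathbf{X}'\subseteq\mathbf{X}$ and $\pi\in\Pi_L$, $\mathcal{P}_{L\setminus\pi}(\mathbf{X}')$ is the set of Pareto optimal elements of $\{x'_\pi:\mathbf{x}'\in\mathbf{X}'\}$ with respect to the objectives $u_p$, $p\in L\setminus\pi$ (an element $y$ of the set is Pareto optimal if no $y'$ in the set satisfies $u_p(y')\ge u_p(y)$ for all $p\in L\setminus\pi$ with strict inequality for some such $p$). $\mathbf{x}\in\mathbf{X}$ is an SCE-PA if $\mathbf{x}\in\mathbf{X}^{PS}$ and $x_\varnothing\in\mathcal{P}_L(\mathbf{X}^{PS})$; $\mathbf{X}^{SCE\text{-}PA}$ is the set of SCE-PAs. *)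

theory Defs
  imports Complex_Main "HOL-Library.FuncSet"
begin

type_synonym profile = "nat \<Rightarrow> nat"
type_synonym utility = "nat \<Rightarrow> profile \<Rightarrow> real"
type_synonym dist = "profile \<Rightarrow> real"

definition players :: "nat \<Rightarrow> nat set" where
  "players n = {1..n}"

definition profiles :: "nat \<Rightarrow> (nat \<Rightarrow> nat set) \<Rightarrow> profile set" where
  "profiles n S = PiE (players n) S"

definition is_finite_game :: "nat \<Rightarrow> (nat \<Rightarrow> nat set) \<Rightarrow> bool" where
  "is_finite_game n S \<longleftrightarrow> n \<ge> 1 \<and> (\<forall>p\<in>players n. finite (S p) \<and> S p \<noteq> {})"

definition dists :: "nat \<Rightarrow> (nat \<Rightarrow> nat set) \<Rightarrow> dist set" where
  "dists n S = {x. (\<forall>s. 0 \<le> x s) \<and> (\<forall>s. s \<notin> profiles n S \<longrightarrow> x s = 0)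
                  \<and> (\<Sum>s\<in>profiles n S. x s) = 1}"

definition util :: "nat \<Rightarrow> (nat \<Rightarrow> nat set) \<Rightarrow> utility \<Rightarrow> nat \<Rightarrow> dist \<Rightarrow> real" where
  "util n S u p x = (\<Sum>s\<in>profiles n S. x s * u p s)"

text \<open>X^CE_P; the sum over s_{-p} is the sum over profiles s with s p = a.\<close>
definition CE_set :: "nat \<Rightarrow> (nat \<Rightarrow> nat set) \<Rightarrow> utility \<Rightarrow> nat set \<Rightarrow> dist set" where
  "CE_set n S u P = {x \<in> dists n S. \<forall>p\<in>P. \<forall>a\<in>S p. \<forall>b\<in>S p. a \<noteq> b \<longrightarrow>
      0 \<le> (\<Sum>s\<in>{s\<in>profiles n S. s p = a}. x s * (u p s - u p (s(p := b))))}"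

definition ordered_subsets :: "nat set \<Rightarrow> nat list set" where
  "ordered_subsets P = {\<pi>. distinct \<pi> \<and> set \<pi> \<subseteq> P}"

text \<open>Elements of bold X: families indexed by ordered subsets of L (values at other lists irrelevant).\<close>
definition XX :: "nat \<Rightarrow> (nat \<Rightarrow> nat set) \<Rightarrow> utility \<Rightarrow> nat set \<Rightarrow> nat set \<Rightarrow> (nat list \<Rightarrow> dist) set" where
  "XX n S u L F = {X. \<forall>\<pi>\<in>ordered_subsets L. X \<pi> \<in> CE_set n S u (set \<pi> \<union> F)}"

definition stable_at :: "nat \<Rightarrow> (nat \<Rightarrow> nat set) \<Rightarrow> utility \<Rightarrow> nat set \<Rightarrow> (nat list \<Rightarrow> dist) \<Rightarrow> nat list \<Rightarrow> bool" where
  "stable_at n S u L X \<pi> \<longleftrightarrow> (\<forall>p\<in>L - set \<pi>. util n S u p (X (\<pi> @ [p])) \<le> util n S u p (X \<pi>))"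

definition perfectly_stable :: "nat \<Rightarrow> (nat \<Rightarrow> nat set) \<Rightarrow> utility \<Rightarrow> nat set \<Rightarrow> nat set \<Rightarrow> (nat list \<Rightarrow> dist) set" where
  "perfectly_stable n S u L F = {X \<in> XX n S u L F. \<forall>\<pi>\<in>ordered_subsets L. stable_at n S u L X \<pi>}"

definition pareto_opt :: "nat \<Rightarrow> (nat \<Rightarrow> nat set) \<Rightarrow> utility \<Rightarrow> nat set \<Rightarrow> (nat list \<Rightarrow> dist) set \<Rightarrow> nat list \<Rightarrow> dist set" where
  "pareto_opt n S u L XS \<pi> =
     {y \<in> (\<lambda>X. X \<pi>) ` XS. \<not> (\<exists>y'\<in>(\<lambda>X. X \<pi>) ` XS.
        (\<forall>p\<in>L - set \<pi>. util n S u p y \<le> util n S u p y') \<and>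
        (\<exists>p\<in>L - set \<pi>. util n S u p y < util n S u p y'))}"

definition SCE_PA :: "nat \<Rightarrow> (nat \<Rightarrow> nat set) \<Rightarrow> utility \<Rightarrow> nat set \<Rightarrow> nat set \<Rightarrow> (nat list \<Rightarrow> dist) set" where
  "SCE_PA n S u L F = {X \<in> perfectly_stable n S u L F.
      X [] \<in> pareto_opt n S u L (perfectly_stable n S u L F) []}"

end

theory Submission imports Defs begin


definition mk :: "nat \<Rightarrow> nat \<Rightarrow> nat \<Rightarrow> profile" where
  "mk a b c = (\<lambda>i. if i = 1 then a else if i = 2 then b else if i = 3 then c else undefined)"

definition S0 :: "nat \<Rightarrow> nat set" where "S0 = (\<lambda>_. {0,1})"

lemma mk_app[simp]: "mk a b c 1 = a" "mk a b c 2 = b" "mk a b c 3 = c" "mk a b c (Suc 0) = a"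
  by (simp_all add: mk_def)

lemma mk_eq[simp]: "mk a b c = mk a' b' c' \<longleftrightarrow> a = a' \<and> b = b' \<and> c = c'"
  by (metis mk_app(1-3))

lemma mk_in0: assumes "a \<in> {0,1}" "b \<in> {0,1}" "c \<in> {0,1}" shows "mk a b c \<in> profiles 3 S0"
  unfolding profiles_def players_def PiE_iff extensional_def
proof (intro conjI ballI CollectI allI impI)
  fix i :: nat assume "i \<in> {1..3}"
  then have "i = 1 \<or> i = 2 \<or> i = 3" by auto
  then show "mk a b c i \<in> S0 i" using assms unfolding S0_def by (elim disjE) simp_all
next
  fix i :: nat assume "i \<notin> {1..3}"
  then have "i \<noteq> 1" "i \<noteq> 2" "i \<noteq> 3" by auto
  then show "mk a b c i = undefined" by (simp add: mk_def)
qed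

lemma prof: "profiles 3 S0 = {mk 0 0 0, mk 0 0 1, mk 0 1 0, mk 0 1 1, mk 1 0 0, mk 1 0 1, mk 1 1 0, mk 1 1 1}"
proof (rule set_eqI, rule iffI)
  fix f assume "f \<in> profiles 3 S0"
  then have h: "f 1 \<in> {0,1}" "f 2 \<in> {0,1}" "f 3 \<in> {0,1}" "\<And>i. i \<notin> {1..3} \<Longrightarrow> f i = undefined"
    by (auto simp: profiles_def players_def S0_def PiE_def extensional_def)
  have e: "f = mk (f 1) (f 2) (f 3)"
  proof
    fix i show "f i = mk (f 1) (f 2) (f 3) i"
      using h(4)[of i] by (cases "i = 1 \<or> i = 2 \<or> i = 3") (auto simp: mk_def)
  qed
  have "f 1 = 0 \<or> f 1 = 1" "f 2 = 0 \<or> f 2 = 1" "f 3 = 0 \<or> f 3 = 1" using h(1-3) by auto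
  then show "f \<in> {mk 0 0 0, mk 0 0 1, mk 0 1 0, mk 0 1 1, mk 1 0 0, mk 1 0 1, mk 1 1 0, mk 1 1 1}"
    by (subst e) (elim disjE; simp only:; simp)
next
  fix f assume "f \<in> {mk 0 0 0, mk 0 0 1, mk 0 1 0, mk 0 1 1, mk 1 0 0, mk 1 0 1, mk 1 1 0, mk 1 1 1}"
  then show "f \<in> profiles 3 S0" using mk_in0 by auto
qed

lemma fin_prof: "finite (profiles 3 S0)" by (simp add: prof)

lemma sum_prof: "(\<Sum>s\<in>profiles 3 S0. g s) = g (mk 0 0 0) + g (mk 0 0 1) + g (mk 0 1 0) + g (mk 0 1 1) + g (mk 1 0 0) + g (mk 1 0 1) + g (mk 1 1 0) + g (mk 1 1 1)"
  by (simp add: prof add.assoc)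

lemma sum_filt: "(\<Sum>s\<in>{s\<in>profiles 3 S0. P s}. g s) = (\<Sum>s\<in>profiles 3 S0. if P s then g s else 0)"
  by (simp add: sum.inter_filter fin_prof)

lemma mk_in[simp]: "a \<in> {0,1} \<Longrightarrow> b \<in> {0,1} \<Longrightarrow> c \<in> {0,1} \<Longrightarrow> mk a b c \<in> profiles 3 S0"
  by (auto simp: prof)

lemma upd_mk[simp]: "(mk a b c)(Suc 0 := x) = mk x b c" "(mk a b c)(1 := x) = mk x b c" "(mk a b c)(2 := x) = mk a x c" "(mk a b c)(3 := x) = mk a b x"
  by (auto simp: mk_def fun_eq_iff)

lemma os3: "ordered_subsets {1,2,3} = {[], [1],[2],[3],[1,2],[2,1],[1,3],[3,1],[2,3],[3,2],
   [1,2,3],[1,3,2],[2,1,3],[2,3,1],[3,1,2],[3,2,1]}"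
proof (rule set_eqI, rule iffI)
  fix \<pi> :: "nat list" assume "\<pi> \<in> ordered_subsets {1,2,3}"
  then have d: "distinct \<pi>" "set \<pi> \<subseteq> {1,2,3}" by (auto simp: ordered_subsets_def)
  have "length \<pi> = card (set \<pi>)" using d(1) by (simp add: distinct_card)
  also have "\<dots> \<le> card {1::nat,2,3}" using d(2) by (intro card_mono) auto
  also have "\<dots> = 3" by simp
  finally have "length \<pi> \<le> 3" .
  then have "\<pi> = [] \<or> (\<exists>a. \<pi> = [a]) \<or> (\<exists>a b. \<pi> = [a,b]) \<or> (\<exists>a b c. \<pi> = [a,b,c])"
    by (cases \<pi> rule: list.exhaust; simp; rename_tac a l; case_tac l; simp; rename_tac b l2; case_tac l2; simp; rename_tac c l3; case_tac l3; simp)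
  then show "\<pi> \<in> {[], [1],[2],[3],[1,2],[2,1],[1,3],[3,1],[2,3],[3,2],
   [1,2,3],[1,3,2],[2,1,3],[2,3,1],[3,1,2],[3,2,1]}"
  proof (elim disjE exE)
    fix a b c assume e: "\<pi> = [a,b,c]"
    have "a = 1 \<or> a = 2 \<or> a = 3" "b = 1 \<or> b = 2 \<or> b = 3" "c = 1 \<or> c = 2 \<or> c = 3" using d(2) e by auto
    then show ?thesis using d(1) e by (elim disjE; simp)
  next
    fix a b assume e: "\<pi> = [a,b]"
    have "a = 1 \<or> a = 2 \<or> a = 3" "b = 1 \<or> b = 2 \<or> b = 3" using d(2) e by auto
    then show ?thesis using d(1) e by (elim disjE; simp)
  next
    fix a assume e: "\<pi> = [a]"
    have "a = 1 \<or> a = 2 \<or> a = 3" using d(2) e by auto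
    then show ?thesis using e by (elim disjE; simp)
  qed simp
next
  fix \<pi> :: "nat list" assume "\<pi> \<in> {[], [1],[2],[3],[1,2],[2,1],[1,3],[3,1],[2,3],[3,2],
   [1,2,3],[1,3,2],[2,1,3],[2,3,1],[3,1,2],[3,2,1]}"
  then show "\<pi> \<in> ordered_subsets {1,2,3}" by (auto simp: ordered_subsets_def)
qed


declare One_nat_def [simp del]

definition tab :: "nat \<Rightarrow> nat \<Rightarrow> nat \<Rightarrow> nat \<Rightarrow> real" where
  "tab p a b c = (if p = 1 then (if a = 0 then (if b = 0 then (if c = 0 then 2 else 1) else (if c = 0 then 0 else 0)) else (if b = 0 then (if c = 0 then 2 else 0) else (if c = 0 then 2 else 0))) else if p = 2 then (if a = 0 then (if b = 0 then (if c = 0 then 1 else 4) else (if c = 0 then 4 else 1)) else (if b = 0 then (if c = 0 then 2 else 1) else (if c = 0 then 3 else 0))) else (if a = 0 then (if b = 0 then (if c = 0 then 1 else 1) else (if c = 0 then 2 else 0)) else (if b = 0 then (if c = 0 then 1 else 1) else (if c = 0 then 1 else 4))))"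

definition gu :: utility where "gu p s = tab p (s 1) (s 2) (s 3)"

lemma gu_vals: "gu 1 (mk 0 0 0) = 2" "gu 1 (mk 0 0 1) = 1" "gu 1 (mk 0 1 0) = 0" "gu 1 (mk 0 1 1) = 0" "gu 1 (mk 1 0 0) = 2" "gu 1 (mk 1 0 1) = 0" "gu 1 (mk 1 1 0) = 2" "gu 1 (mk 1 1 1) = 0" "gu 2 (mk 0 0 0) = 1" "gu 2 (mk 0 0 1) = 4" "gu 2 (mk 0 1 0) = 4" "gu 2 (mk 0 1 1) = 1" "gu 2 (mk 1 0 0) = 2" "gu 2 (mk 1 0 1) = 1" "gu 2 (mk 1 1 0) = 3" "gu 2 (mk 1 1 1) = 0" "gu 3 (mk 0 0 0) = 1" "gu 3 (mk 0 0 1) = 1" "gu 3 (mk 0 1 0) = 2" "gu 3 (mk 0 1 1) = 0" "gu 3 (mk 1 0 0) = 1" "gu 3 (mk 1 0 1) = 1" "gu 3 (mk 1 1 0) = 1" "gu 3 (mk 1 1 1) = 4"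
  by (simp_all add: gu_def tab_def)

lemma gu_valsS: "gu (Suc 0) (mk 0 0 0) = 2" "gu (Suc 0) (mk 0 0 (Suc 0)) = 1" "gu (Suc 0) (mk 0 (Suc 0) 0) = 0" "gu (Suc 0) (mk 0 (Suc 0) (Suc 0)) = 0" "gu (Suc 0) (mk (Suc 0) 0 0) = 2" "gu (Suc 0) (mk (Suc 0) 0 (Suc 0)) = 0" "gu (Suc 0) (mk (Suc 0) (Suc 0) 0) = 2" "gu (Suc 0) (mk (Suc 0) (Suc 0) (Suc 0)) = 0" "gu 2 (mk 0 0 0) = 1" "gu 2 (mk 0 0 (Suc 0)) = 4" "gu 2 (mk 0 (Suc 0) 0) = 4" "gu 2 (mk 0 (Suc 0) (Suc 0)) = 1" "gu 2 (mk (Suc 0) 0 0) = 2" "gu 2 (mk (Suc 0) 0 (Suc 0)) = 1" "gu 2 (mk (Suc 0) (Suc 0) 0) = 3" "gu 2 (mk (Suc 0) (Suc 0) (Suc 0)) = 0" "gu 3 (mk 0 0 0) = 1" "gu 3 (mk 0 0 (Suc 0)) = 1" "gu 3 (mk 0 (Suc 0) 0) = 2" "gu 3 (mk 0 (Suc 0) (Suc 0)) = 0" "gu 3 (mk (Suc 0) 0 0) = 1" "gu 3 (mk (Suc 0) 0 (Suc 0)) = 1" "gu 3 (mk (Suc 0) (Suc 0) 0) = 1" "gu 3 (mk (Suc 0) (Suc 0) (Suc 0)) = 4"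
  by (simp_all add: gu_def tab_def)


definition OS :: "nat list set" where "OS = {[], [1],[2],[3],[1,2],[2,1],[1,3],[3,1],[2,3],[3,2],
   [1,2,3],[1,3,2],[2,1,3],[2,3,1],[3,1,2],[3,2,1]}"

lemma OS_eq: "ordered_subsets {1,2,3} = OS" unfolding OS_def by (rule os3)

definition mkd :: "(nat \<Rightarrow> nat \<Rightarrow> nat \<Rightarrow> real) \<Rightarrow> dist" where
  "mkd v s = (if s \<in> profiles 3 S0 then v (s 1) (s 2) (s 3) else 0)"

lemma mkd_mk[simp]: "a \<in> {0,1} \<Longrightarrow> b \<in> {0,1} \<Longrightarrow> c \<in> {0,1} \<Longrightarrow> mkd v (mk a b c) = v a b c"
  by (simp add: mkd_def)

lemma mkd_dists:
  assumes "\<And>a b c. a \<in> {0,1} \<Longrightarrow> b \<in> {0,1} \<Longrightarrow> c \<in> {0,1} \<Longrightarrow> 0 \<le> v a b c"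
    and "v 0 0 0 + v 0 0 1 + v 0 1 0 + v 0 1 1 + v 1 0 0 + v 1 0 1 + v 1 1 0 + v 1 1 1 = 1"
  shows "mkd v \<in> dists 3 S0"
proof -
  have "0 \<le> mkd v s" for s
  proof (cases "s \<in> profiles 3 S0")
    case True
    then show ?thesis unfolding prof using assms(1) by auto
  qed (simp add: mkd_def)
  moreover have "(\<Sum>s\<in>profiles 3 S0. mkd v s) = 1"
    using assms(2) by (simp add: sum_prof)
  ultimately show ?thesis by (auto simp: dists_def mkd_def)
qed

lemma CE_inst: "x \<in> CE_set 3 S0 gu P \<Longrightarrow> p \<in> P \<Longrightarrow> a \<in> {0,1} \<Longrightarrow> b \<in> {0,1} \<Longrightarrow> a \<noteq> b \<Longrightarrow>
   0 \<le> (\<Sum>s\<in>{s\<in>profiles 3 S0. s p = a}. x s * (gu p s - gu p (s(p := b))))"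
  unfolding CE_set_def S0_def mem_Collect_eq by blast

lemma CE_dist: assumes "x \<in> CE_set 3 S0 gu P"
  shows "0 \<le> x (mk 0 0 0)" "0 \<le> x (mk 0 0 1)" "0 \<le> x (mk 0 1 0)" "0 \<le> x (mk 0 1 1)"
   "0 \<le> x (mk 1 0 0)" "0 \<le> x (mk 1 0 1)" "0 \<le> x (mk 1 1 0)" "0 \<le> x (mk 1 1 1)"
   "x (mk 0 0 0) + x (mk 0 0 1) + x (mk 0 1 0) + x (mk 0 1 1) + x (mk 1 0 0) + x (mk 1 0 1) + x (mk 1 1 0) + x (mk 1 1 1) = 1"
proof -
  have d: "x \<in> dists 3 S0" using assms unfolding CE_set_def by blast
  hence n: "\<And>s. 0 \<le> x s" and s: "(\<Sum>s\<in>profiles 3 S0. x s) = 1" unfolding dists_def by blast+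
  show "0 \<le> x (mk 0 0 0)" "0 \<le> x (mk 0 0 1)" "0 \<le> x (mk 0 1 0)" "0 \<le> x (mk 0 1 1)"
   "0 \<le> x (mk 1 0 0)" "0 \<le> x (mk 1 0 1)" "0 \<le> x (mk 1 1 0)" "0 \<le> x (mk 1 1 1)" by (rule n)+
  show "x (mk 0 0 0) + x (mk 0 0 1) + x (mk 0 1 0) + x (mk 0 1 1) + x (mk 1 0 0) + x (mk 1 0 1) + x (mk 1 1 0) + x (mk 1 1 1) = 1"
    using s unfolding sum_prof .
qed

lemma PS_CE: "Z \<in> perfectly_stable 3 S0 gu {1,2,3} {} \<Longrightarrow> \<pi> \<in> OS \<Longrightarrow> Z \<pi> \<in> CE_set 3 S0 gu (set \<pi>)"
  unfolding perfectly_stable_def XX_def OS_eq by simp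

lemma PS_st: "Z \<in> perfectly_stable 3 S0 gu {1,2,3} {} \<Longrightarrow> \<pi> \<in> OS \<Longrightarrow> p \<in> {1,2,3} - set \<pi> \<Longrightarrow>
   util 3 S0 gu p (Z (\<pi> @ [p])) \<le> util 3 S0 gu p (Z \<pi>)"
  unfolding perfectly_stable_def stable_at_def OS_eq by simp

lemma util_exp: "util 3 S0 gu p x = x (mk 0 0 0) * gu p (mk 0 0 0) + x (mk 0 0 1) * gu p (mk 0 0 1) + x (mk 0 1 0) * gu p (mk 0 1 0) + x (mk 0 1 1) * gu p (mk 0 1 1) + x (mk 1 0 0) * gu p (mk 1 0 0) + x (mk 1 0 1) * gu p (mk 1 0 1) + x (mk 1 1 0) * gu p (mk 1 1 0) + x (mk 1 1 1) * gu p (mk 1 1 1)"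
  by (simp add: util_def sum_prof)

lemma lin_sum: "0 \<le> a \<Longrightarrow> 0 \<le> b \<Longrightarrow> 0 \<le> c \<Longrightarrow> (0::real) \<le> a + c * b"
  by simp

lemma pareto_bound: assumes "Z \<in> perfectly_stable 3 S0 gu {1,2,3} {}"
  shows "1 * util 3 S0 gu 1 (Z []) + 1 * util 3 S0 gu 2 (Z []) + 4 * util 3 S0 gu 3 (Z []) \<le> (1037/70)"
proof -
  have pce0: "Z [] \<in> CE_set 3 S0 gu {}" using PS_CE[OF assms, of "[]"] by (simp add: OS_def)
  note pce0d = CE_dist[OF pce0]
  have pce1: "Z [1] \<in> CE_set 3 S0 gu {1}" using PS_CE[OF assms, of "[1]"] by (simp add: OS_def)
  note pce1d = CE_dist[OF pce1]
  have pce2: "Z [2] \<in> CE_set 3 S0 gu {2}" using PS_CE[OF assms, of "[2]"] by (simp add: OS_def)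
  note pce2d = CE_dist[OF pce2]
  have pce12: "Z [1,2] \<in> CE_set 3 S0 gu {1,2}" using PS_CE[OF assms, of "[1,2]"] by (simp add: OS_def)
  note pce12d = CE_dist[OF pce12]
  have pce13: "Z [1,3] \<in> CE_set 3 S0 gu {1,3}" using PS_CE[OF assms, of "[1,3]"] by (simp add: OS_def)
  note pce13d = CE_dist[OF pce13]
  have pce1_101: "0 \<le> 0 * Z [1] (mk 0 0 0) + 1 * Z [1] (mk 0 0 1) + (-2) * Z [1] (mk 0 1 0) + 0 * Z [1] (mk 0 1 1)" using CE_inst[OF pce1, of 1 0 1] by (simp add: sum_filt sum_prof gu_vals gu_valsS)
  have pce1_110: "0 \<le> 0 * Z [1] (mk 1 0 0) + (-1) * Z [1] (mk 1 0 1) + 2 * Z [1] (mk 1 1 0) + 0 * Z [1] (mk 1 1 1)" using CE_inst[OF pce1, of 1 1 0] by (simp add: sum_filt sum_prof gu_vals gu_valsS)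
  have pce2_210: "0 \<le> 3 * Z [2] (mk 0 1 0) + (-3) * Z [2] (mk 0 1 1) + 1 * Z [2] (mk 1 1 0) + (-1) * Z [2] (mk 1 1 1)" using CE_inst[OF pce2, of 2 1 0] by (simp add: sum_filt sum_prof gu_vals gu_valsS)
  have pce12_101: "0 \<le> 0 * Z [1,2] (mk 0 0 0) + 1 * Z [1,2] (mk 0 0 1) + (-2) * Z [1,2] (mk 0 1 0) + 0 * Z [1,2] (mk 0 1 1)" using CE_inst[OF pce12, of 1 0 1] by (simp add: sum_filt sum_prof gu_vals gu_valsS)
  have pce12_110: "0 \<le> 0 * Z [1,2] (mk 1 0 0) + (-1) * Z [1,2] (mk 1 0 1) + 2 * Z [1,2] (mk 1 1 0) + 0 * Z [1,2] (mk 1 1 1)" using CE_inst[OF pce12, of 1 1 0] by (simp add: sum_filt sum_prof gu_vals gu_valsS)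
  have pce12_201: "0 \<le> (-3) * Z [1,2] (mk 0 0 0) + 3 * Z [1,2] (mk 0 0 1) + (-1) * Z [1,2] (mk 1 0 0) + 1 * Z [1,2] (mk 1 0 1)" using CE_inst[OF pce12, of 2 0 1] by (simp add: sum_filt sum_prof gu_vals gu_valsS)
  have pce12_210: "0 \<le> 3 * Z [1,2] (mk 0 1 0) + (-3) * Z [1,2] (mk 0 1 1) + 1 * Z [1,2] (mk 1 1 0) + (-1) * Z [1,2] (mk 1 1 1)" using CE_inst[OF pce12, of 2 1 0] by (simp add: sum_filt sum_prof gu_vals gu_valsS)
  have pce13_310: "0 \<le> 0 * Z [1,3] (mk 0 0 1) + (-2) * Z [1,3] (mk 0 1 1) + 0 * Z [1,3] (mk 1 0 1) + 3 * Z [1,3] (mk 1 1 1)" using CE_inst[OF pce13, of 3 1 0] by (simp add: sum_filt sum_prof gu_vals gu_valsS)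
  have pst0_1: "0 \<le> (Z [] (mk 0 0 0) * 2 + Z [] (mk 0 0 1) * 1 + Z [] (mk 0 1 0) * 0 + Z [] (mk 0 1 1) * 0 + Z [] (mk 1 0 0) * 2 + Z [] (mk 1 0 1) * 0 + Z [] (mk 1 1 0) * 2 + Z [] (mk 1 1 1) * 0) - (Z [1] (mk 0 0 0) * 2 + Z [1] (mk 0 0 1) * 1 + Z [1] (mk 0 1 0) * 0 + Z [1] (mk 0 1 1) * 0 + Z [1] (mk 1 0 0) * 2 + Z [1] (mk 1 0 1) * 0 + Z [1] (mk 1 1 0) * 2 + Z [1] (mk 1 1 1) * 0)" using PS_st[OF assms, of "[]" 1]  by (simp add: OS_def util_exp gu_vals gu_valsS)
  have pst0_2: "0 \<le> (Z [] (mk 0 0 0) * 1 + Z [] (mk 0 0 1) * 4 + Z [] (mk 0 1 0) * 4 + Z [] (mk 0 1 1) * 1 + Z [] (mk 1 0 0) * 2 + Z [] (mk 1 0 1) * 1 + Z [] (mk 1 1 0) * 3 + Z [] (mk 1 1 1) * 0) - (Z [2] (mk 0 0 0) * 1 + Z [2] (mk 0 0 1) * 4 + Z [2] (mk 0 1 0) * 4 + Z [2] (mk 0 1 1) * 1 + Z [2] (mk 1 0 0) * 2 + Z [2] (mk 1 0 1) * 1 + Z [2] (mk 1 1 0) * 3 + Z [2] (mk 1 1 1) * 0)" using PS_st[OF assms, of "[]" 2]  by (simp add: OS_def util_exp gu_vals gu_valsS)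
  have pst1_2: "0 \<le> (Z [1] (mk 0 0 0) * 1 + Z [1] (mk 0 0 1) * 4 + Z [1] (mk 0 1 0) * 4 + Z [1] (mk 0 1 1) * 1 + Z [1] (mk 1 0 0) * 2 + Z [1] (mk 1 0 1) * 1 + Z [1] (mk 1 1 0) * 3 + Z [1] (mk 1 1 1) * 0) - (Z [1,2] (mk 0 0 0) * 1 + Z [1,2] (mk 0 0 1) * 4 + Z [1,2] (mk 0 1 0) * 4 + Z [1,2] (mk 0 1 1) * 1 + Z [1,2] (mk 1 0 0) * 2 + Z [1,2] (mk 1 0 1) * 1 + Z [1,2] (mk 1 1 0) * 3 + Z [1,2] (mk 1 1 1) * 0)" using PS_st[OF assms, of "[1]" 2]  by (simp add: OS_def util_exp gu_vals gu_valsS)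
  have pst1_3: "0 \<le> (Z [1] (mk 0 0 0) * 1 + Z [1] (mk 0 0 1) * 1 + Z [1] (mk 0 1 0) * 2 + Z [1] (mk 0 1 1) * 0 + Z [1] (mk 1 0 0) * 1 + Z [1] (mk 1 0 1) * 1 + Z [1] (mk 1 1 0) * 1 + Z [1] (mk 1 1 1) * 4) - (Z [1,3] (mk 0 0 0) * 1 + Z [1,3] (mk 0 0 1) * 1 + Z [1,3] (mk 0 1 0) * 2 + Z [1,3] (mk 0 1 1) * 0 + Z [1,3] (mk 1 0 0) * 1 + Z [1,3] (mk 1 0 1) * 1 + Z [1,3] (mk 1 1 0) * 1 + Z [1,3] (mk 1 1 1) * 4)" using PS_st[OF assms, of "[1]" 3]  by (simp add: OS_def util_exp gu_vals gu_valsS)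
  have nonneg: "0 \<le> 0 + (7/10) * (0 * Z [1] (mk 0 0 0) + 1 * Z [1] (mk 0 0 1) + (-2) * Z [1] (mk 0 1 0) + 0 * Z [1] (mk 0 1 1)) + (31/20) * (0 * Z [1] (mk 1 0 0) + (-1) * Z [1] (mk 1 0 1) + 2 * Z [1] (mk 1 1 0) + 0 * Z [1] (mk 1 1 1)) + 1 * (3 * Z [2] (mk 0 1 0) + (-3) * Z [2] (mk 0 1 1) + 1 * Z [2] (mk 1 1 0) + (-1) * Z [2] (mk 1 1 1)) + (6/35) * (0 * Z [1,2] (mk 0 0 0) + 1 * Z [1,2] (mk 0 0 1) + (-2) * Z [1,2] (mk 0 1 0) + 0 * Z [1,2] (mk 0 1 1)) + (4/35) * (0 * Z [1,2] (mk 1 0 0) + (-1) * Z [1,2] (mk 1 0 1) + 2 * Z [1,2] (mk 1 1 0) + 0 * Z [1,2] (mk 1 1 1)) + (1/35) * ((-3) * Z [1,2] (mk 0 0 0) + 3 * Z [1,2] (mk 0 0 1) + (-1) * Z [1,2] (mk 1 0 0) + 1 * Z [1,2] (mk 1 0 1)) + (17/35) * (3 * Z [1,2] (mk 0 1 0) + (-3) * Z [1,2] (mk 0 1 1) + 1 * Z [1,2] (mk 1 1 0) + (-1) * Z [1,2] (mk 1 1 1)) + (1/10) * (0 * Z [1,3] (mk 0 0 1) + (-2) * Z [1,3] (mk 0 1 1) + 0 * Z [1,3] (mk 1 0 1) + 3 * Z [1,3] (mk 1 1 1)) + 2 * ((Z [] (mk 0 0 0) * 2 + Z [] (mk 0 0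 1) * 1 + Z [] (mk 0 1 0) * 0 + Z [] (mk 0 1 1) * 0 + Z [] (mk 1 0 0) * 2 + Z [] (mk 1 0 1) * 0 + Z [] (mk 1 1 0) * 2 + Z [] (mk 1 1 1) * 0) - (Z [1] (mk 0 0 0) * 2 + Z [1] (mk 0 0 1) * 1 + Z [1] (mk 0 1 0) * 0 + Z [1] (mk 0 1 1) * 0 + Z [1] (mk 1 0 0) * 2 + Z [1] (mk 1 0 1) * 0 + Z [1] (mk 1 1 0) * 2 + Z [1] (mk 1 1 1) * 0)) + 1 * ((Z [] (mk 0 0 0) * 1 + Z [] (mk 0 0 1) * 4 + Z [] (mk 0 1 0) * 4 + Z [] (mk 0 1 1) * 1 + Z [] (mk 1 0 0) * 2 + Z [] (mk 1 0 1) * 1 + Z [] (mk 1 1 0) * 3 + Z [] (mk 1 1 1) * 0) - (Z [2] (mk 0 0 0) * 1 + Z [2] (mk 0 0 1) * 4 + Z [2] (mk 0 1 0) * 4 + Z [2] (mk 0 1 1) * 1 + Z [2] (mk 1 0 0) * 2 + Z [2] (mk 1 0 1) * 1 + Z [2] (mk 1 1 0) * 3 + Z [2] (mk 1 1 1) * 0)) + (2/5) * ((Z [1] (mk 0 0 0) * 1 + Z [1] (mk 0 0 1) * 4 + Z [1] (mk 0 1 0) * 4 + Z [1] (mk 0 1 1) * 1 + Z [1] (mk 1 0 0) * 2 + Z [1] (mk 1 0 1) * 1 + Z [1] (mk 1 1 0) * 3 + Z [1] (mk 1 1 1) * 0) - (Z [1,2] (mk 0 0 0) * 1 + Z [1,2]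 (mk 0 0 1) * 4 + Z [1,2] (mk 0 1 0) * 4 + Z [1,2] (mk 0 1 1) * 1 + Z [1,2] (mk 1 0 0) * 2 + Z [1,2] (mk 1 0 1) * 1 + Z [1,2] (mk 1 1 0) * 3 + Z [1,2] (mk 1 1 1) * 0)) + (1/10) * ((Z [1] (mk 0 0 0) * 1 + Z [1] (mk 0 0 1) * 1 + Z [1] (mk 0 1 0) * 2 + Z [1] (mk 0 1 1) * 0 + Z [1] (mk 1 0 0) * 1 + Z [1] (mk 1 0 1) * 1 + Z [1] (mk 1 1 0) * 1 + Z [1] (mk 1 1 1) * 4) - (Z [1,3] (mk 0 0 0) * 1 + Z [1,3] (mk 0 0 1) * 1 + Z [1,3] (mk 0 1 0) * 2 + Z [1,3] (mk 0 1 1) * 0 + Z [1,3] (mk 1 0 0) * 1 + Z [1,3] (mk 1 0 1) * 1 + Z [1,3] (mk 1 1 0) * 1 + Z [1,3] (mk 1 1 1) * 4)) + 4 * (Z [] (mk 0 0 0)) + 1 * (Z [] (mk 0 0 1)) + 14 * (Z [] (mk 0 1 1)) + 2 * (Z [] (mk 1 0 0)) + 10 * (Z [] (mk 1 0 1)) + (39/10) * (Z [1] (mk 0 0 0)) + (7/2) * (Z [1] (mk 1 0 0)) + (29/20) * (Z [1] (mk 1 0 1)) + 3 * (Z [2] (mk 0 0 1)) + 3 * (Z [2] (mk 0 1 1)) + 1 * (Z [2] (mk 1 0 0)) + 1 * (Z [2] (mk 1 1 0)) + (6/7) * (Z [1,2] (mk 0 0 1)) + (48/35) * (Z [1,2]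 (mk 0 1 1)) + (12/35) * (Z [1,2] (mk 1 0 0)) + (1/10) * (Z [1,3] (mk 0 1 0)) + (1/10) * (Z [1,3] (mk 0 1 1))" by (rule lin_sum[OF lin_sum[OF lin_sum[OF lin_sum[OF lin_sum[OF lin_sum[OF lin_sum[OF lin_sum[OF lin_sum[OF lin_sum[OF lin_sum[OF lin_sum[OF lin_sum[OF lin_sum[OF lin_sum[OF lin_sum[OF lin_sum[OF lin_sum[OF lin_sum[OF lin_sum[OF lin_sum[OF lin_sum[OF lin_sum[OF lin_sum[OF lin_sum[OF lin_sum[OF lin_sum[OF lin_sum[OF lin_sum[OF order_refl pce1_101] pce1_110] pce2_210] pce12_101] pce12_110] pce12_201] pce12_210] pce13_310] pst0_1] pst0_2] pst1_2] pst1_3] pce0d(1)] pce0d(2)] pce0d(4)] pce0d(5)] pce0d(6)] pce1d(1)] pce1d(5)] pce1d(6)] pce2d(2)] pce2d(4)] pce2d(5)] pce2d(7)] pce12d(2)] pce12d(4)] pce12d(5)] pce13d(3)] pce13d(4)]) simp_all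
  have fin: "1 * (Z [] (mk 0 0 0) * 2 + Z [] (mk 0 0 1) * 1 + Z [] (mk 0 1 0) * 0 + Z [] (mk 0 1 1) * 0 + Z [] (mk 1 0 0) * 2 + Z [] (mk 1 0 1) * 0 + Z [] (mk 1 1 0) * 2 + Z [] (mk 1 1 1) * 0) + 1 * (Z [] (mk 0 0 0) * 1 + Z [] (mk 0 0 1) * 4 + Z [] (mk 0 1 0) * 4 + Z [] (mk 0 1 1) * 1 + Z [] (mk 1 0 0) * 2 + Z [] (mk 1 0 1) * 1 + Z [] (mk 1 1 0) * 3 + Z [] (mk 1 1 1) * 0) + 4 * (Z [] (mk 0 0 0) * 1 + Z [] (mk 0 0 1) * 1 + Z [] (mk 0 1 0) * 2 + Z [] (mk 0 1 1) * 0 + Z [] (mk 1 0 0) * 1 + Z [] (mk 1 0 1) * 1 + Z [] (mk 1 1 0) * 1 + Z [] (mk 1 1 1) * 4) \<le> (1037/70)" using nonneg pce0d(9) pce1d(9) pce2d(9) pce12d(9) pce13d(9) unfolding distrib_left right_diff_distrib mult.assoc[symmetric] by linarith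
  then show ?thesis unfolding util_exp gu_vals .
qed

definition v0 :: "nat \<Rightarrow> nat \<Rightarrow> nat \<Rightarrow> real" where "v0 a b c = (if a = 0 then (if b = 0 then (if c = 0 then 0 else 0) else (if c = 0 then (241/1120) else 0)) else (if b = 0 then (if c = 0 then 0 else 0) else (if c = 0 then (13/280) else (827/1120))))"

definition v1 :: "nat \<Rightarrow> nat \<Rightarrow> nat \<Rightarrow> real" where "v1 a b c = (if a = 0 then (if b = 0 then (if c = 0 then 0 else (13/140)) else (if c = 0 then (13/280) else (23/35))) else (if b = 0 then (if c = 0 then 0 else 0) else (if c = 0 then 0 else (57/280))))"

definition v2 :: "nat \<Rightarrow> nat \<Rightarrow> nat \<Rightarrow> real" where "v2 a b c = (if a = 0 then (if b = 0 then (if c = 0 then (1/4) else 0) else (if c = 0 then 0 else 0)) else (if b = 0 then (if c = 0 then 0 else (3/4)) else (if c = 0 then 0 else 0)))"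

definition v3 :: "nat \<Rightarrow> nat \<Rightarrow> nat \<Rightarrow> real" where "v3 a b c = (if a = 0 then (if b = 0 then (if c = 0 then 0 else 0) else (if c = 0 then (3/17) else 0)) else (if b = 0 then (if c = 0 then 0 else 0) else (if c = 0 then (5/51) else (37/51))))"

definition v12 :: "nat \<Rightarrow> nat \<Rightarrow> nat \<Rightarrow> real" where "v12 a b c = (if a = 0 then (if b = 0 then (if c = 0 then (1/7) else 0) else (if c = 0 then 0 else 0)) else (if b = 0 then (if c = 0 then 0 else (3/7)) else (if c = 0 then (3/14) else (3/14))))"

definition v13 :: "nat \<Rightarrow> nat \<Rightarrow> nat \<Rightarrow> real" where "v13 a b c = (if a = 0 then (if b = 0 then (if c = 0 then 0 else (5/164)) else (if c = 0 then 0 else 0)) else (if b = 0 then (if c = 0 then (159/164) else 0) else (if c = 0 then 0 else 0)))"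

definition v21 :: "nat \<Rightarrow> nat \<Rightarrow> nat \<Rightarrow> real" where "v21 a b c = (if a = 0 then (if b = 0 then (if c = 0 then 0 else (29/82)) else (if c = 0 then (29/164) else (29/164))) else (if b = 0 then (if c = 0 then 0 else (6/41)) else (if c = 0 then (3/41) else (3/41))))"

definition v23 :: "nat \<Rightarrow> nat \<Rightarrow> nat \<Rightarrow> real" where "v23 a b c = (if a = 0 then (if b = 0 then (if c = 0 then (25/56) else (11/28)) else (if c = 0 then 0 else 0)) else (if b = 0 then (if c = 0 then 0 else (9/56)) else (if c = 0 then 0 else 0)))"

definition v31 :: "nat \<Rightarrow> nat \<Rightarrow> nat \<Rightarrow> real" where "v31 a b c = (if a = 0 then (if b = 0 then (if c = 0 then 0 else (10/51)) else (if c = 0 then (5/51) else (36/85))) else (if b = 0 then (if c = 0 then 0 else 0) else (if c = 0 then 0 else (24/85))))"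

definition v32 :: "nat \<Rightarrow> nat \<Rightarrow> nat \<Rightarrow> real" where "v32 a b c = (if a = 0 then (if b = 0 then (if c = 0 then (1/4) else 0) else (if c = 0 then 0 else 0)) else (if b = 0 then (if c = 0 then 0 else (3/4)) else (if c = 0 then 0 else 0)))"

definition v123 :: "nat \<Rightarrow> nat \<Rightarrow> nat \<Rightarrow> real" where "v123 a b c = (if a = 0 then (if b = 0 then (if c = 0 then 0 else (61/140)) else (if c = 0 then (61/280) else (43/280))) else (if b = 0 then (if c = 0 then 0 else 0) else (if c = 0 then 0 else (27/140))))"

definition v132 :: "nat \<Rightarrow> nat \<Rightarrow> nat \<Rightarrow> real" where "v132 a b c = (if a = 0 then (if b = 0 then (if c = 0 then (11/41) else (9/41)) else (if c = 0 then (9/82) else (9/82))) else (if b = 0 then (if c = 0 then 0 else (6/41)) else (if c = 0 then (3/41) else (3/41))))"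

definition v213 :: "nat \<Rightarrow> nat \<Rightarrow> nat \<Rightarrow> real" where "v213 a b c = (if a = 0 then (if b = 0 then (if c = 0 then (11/41) else (9/41)) else (if c = 0 then (9/82) else (9/82))) else (if b = 0 then (if c = 0 then 0 else (6/41)) else (if c = 0 then (3/41) else (3/41))))"

definition v231 :: "nat \<Rightarrow> nat \<Rightarrow> nat \<Rightarrow> real" where "v231 a b c = (if a = 0 then (if b = 0 then (if c = 0 then 0 else (1/7)) else (if c = 0 then (1/14) else (1/14))) else (if b = 0 then (if c = 0 then (11/21) else (2/21)) else (if c = 0 then (1/21) else (1/21))))"

definition v312 :: "nat \<Rightarrow> nat \<Rightarrow> nat \<Rightarrow> real" where "v312 a b c = (if a = 0 then (if b = 0 then (if c = 0 then (11/50) else (9/50)) else (if c = 0 then (9/100) else 0)) else (if b = 0 then (if c = 0 then 0 else (3/25)) else (if c = 0 then (3/50) else (33/100))))"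

definition v321 :: "nat \<Rightarrow> nat \<Rightarrow> nat \<Rightarrow> real" where "v321 a b c = (if a = 0 then (if b = 0 then (if c = 0 then 0 else (3/10)) else (if c = 0 then (3/20) else (3/20))) else (if b = 0 then (if c = 0 then 0 else (1/5)) else (if c = 0 then (1/10) else (1/10))))"

definition vt :: "nat list \<Rightarrow> nat \<Rightarrow> nat \<Rightarrow> nat \<Rightarrow> real" where
  "vt \<pi> = (if \<pi> = [] then v0 else if \<pi> = [1] then v1 else if \<pi> = [2] then v2 else if \<pi> = [3] then v3 else if \<pi> = [1,2] then v12 else if \<pi> = [1,3] then v13 else if \<pi> = [2,1] then v21 else if \<pi> = [2,3] then v23 else if \<pi> = [3,1] then v31 else if \<pi> = [3,2] then v32 else if \<pi> = [1,2,3] then v123 else if \<pi> = [1,3,2] then v132 else if \<pi> = [2,1,3] then v213 else if \<pi> = [2,3,1] then v231 else if \<pi> = [3,1,2] then v312 else if \<pi> = [3,2,1] then v321 else (\<lambda>a b c. 0))"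

definition X0 :: "nat list \<Rightarrow> dist" where "X0 \<pi> = mkd (vt \<pi>)"

lemma X0_0: "X0 [] = mkd v0" by (simp add: X0_def vt_def)
lemma X0_1: "X0 [1] = mkd v1" by (simp add: X0_def vt_def)
lemma X0_2: "X0 [2] = mkd v2" by (simp add: X0_def vt_def)
lemma X0_3: "X0 [3] = mkd v3" by (simp add: X0_def vt_def)
lemma X0_12: "X0 [1,2] = mkd v12" by (simp add: X0_def vt_def)
lemma X0_13: "X0 [1,3] = mkd v13" by (simp add: X0_def vt_def)
lemma X0_21: "X0 [2,1] = mkd v21" by (simp add: X0_def vt_def)
lemma X0_23: "X0 [2,3] = mkd v23" by (simp add: X0_def vt_def)
lemma X0_31: "X0 [3,1] = mkd v31" by (simp add: X0_def vt_def)
lemma X0_32: "X0 [3,2] = mkd v32" by (simp add: X0_def vt_def)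
lemma X0_123: "X0 [1,2,3] = mkd v123" by (simp add: X0_def vt_def)
lemma X0_132: "X0 [1,3,2] = mkd v132" by (simp add: X0_def vt_def)
lemma X0_213: "X0 [2,1,3] = mkd v213" by (simp add: X0_def vt_def)
lemma X0_231: "X0 [2,3,1] = mkd v231" by (simp add: X0_def vt_def)
lemma X0_312: "X0 [3,1,2] = mkd v312" by (simp add: X0_def vt_def)
lemma X0_321: "X0 [3,2,1] = mkd v321" by (simp add: X0_def vt_def)
lemmas X0_simps = X0_0 X0_1 X0_2 X0_3 X0_12 X0_13 X0_21 X0_23 X0_31 X0_32 X0_123 X0_132 X0_213 X0_231 X0_312 X0_321

lemma CE_intro: "x \<in> dists 3 S0 \<Longrightarrow> (\<And>p a b. p \<in> P \<Longrightarrow> a \<in> {0,1} \<Longrightarrow> b \<in> {0,1} \<Longrightarrow> a \<noteq> b \<Longrightarrow>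
   0 \<le> (\<Sum>s\<in>{s\<in>profiles 3 S0. s p = a}. x s * (gu p s - gu p (s(p := b))))) \<Longrightarrow> x \<in> CE_set 3 S0 gu P"
  unfolding CE_set_def S0_def by blast

lemma X0ce_0: "X0 [] \<in> CE_set 3 S0 gu (set [] \<union> {})"
  unfolding X0_simps
proof (rule CE_intro)
  show "mkd v0 \<in> dists 3 S0" by (rule mkd_dists) (auto simp: v0_def)
next
  fix p a b :: nat assume h: "p \<in> set [] \<union> {}" "a \<in> {0::nat,1}" "b \<in> {0::nat,1}" "a \<noteq> b"
  from h(1) have hp: "False" by simp
  from h(2-4) have hab: "(a = 0 \<and> b = 1) \<or> (a = 1 \<and> b = 0)" by auto
  from hp hab show "0 \<le> (\<Sum>s\<in>{s\<in>profiles 3 S0. s p = a}. mkd v0 s * (gu p s - gu p (s(p := b))))"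
    by (elim disjE conjE; simp add: sum_filt sum_prof gu_vals gu_valsS v0_def)
qed

lemma X0st_0: "stable_at 3 S0 gu {1,2,3} X0 []"
  unfolding stable_at_def by (auto simp: util_exp gu_vals gu_valsS X0_simps v0_def v1_def v2_def v3_def v12_def v13_def v21_def v23_def v31_def v32_def v123_def v132_def v213_def v231_def v312_def v321_def)

lemma X0ce_1: "X0 [1] \<in> CE_set 3 S0 gu (set [1] \<union> {})"
  unfolding X0_simps
proof (rule CE_intro)
  show "mkd v1 \<in> dists 3 S0" by (rule mkd_dists) (auto simp: v1_def)
next
  fix p a b :: nat assume h: "p \<in> set [1] \<union> {}" "a \<in> {0::nat,1}" "b \<in> {0::nat,1}" "a \<noteq> b"
  from h(1) have hp: "p = 1" by simp
  from h(2-4) have hab: "(a = 0 \<and> b = 1) \<or> (a = 1 \<and> b = 0)" by auto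
  from hp hab show "0 \<le> (\<Sum>s\<in>{s\<in>profiles 3 S0. s p = a}. mkd v1 s * (gu p s - gu p (s(p := b))))"
    by (elim disjE conjE; simp add: sum_filt sum_prof gu_vals gu_valsS v1_def)
qed

lemma X0st_1: "stable_at 3 S0 gu {1,2,3} X0 [1]"
  unfolding stable_at_def by (auto simp: util_exp gu_vals gu_valsS X0_simps v0_def v1_def v2_def v3_def v12_def v13_def v21_def v23_def v31_def v32_def v123_def v132_def v213_def v231_def v312_def v321_def)

lemma X0ce_2: "X0 [2] \<in> CE_set 3 S0 gu (set [2] \<union> {})"
  unfolding X0_simps
proof (rule CE_intro)
  show "mkd v2 \<in> dists 3 S0" by (rule mkd_dists) (auto simp: v2_def)
next
  fix p a b :: nat assume h: "p \<in> set [2] \<union> {}" "a \<in> {0::nat,1}" "b \<in> {0::nat,1}" "a \<noteq> b"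
  from h(1) have hp: "p = 2" by simp
  from h(2-4) have hab: "(a = 0 \<and> b = 1) \<or> (a = 1 \<and> b = 0)" by auto
  from hp hab show "0 \<le> (\<Sum>s\<in>{s\<in>profiles 3 S0. s p = a}. mkd v2 s * (gu p s - gu p (s(p := b))))"
    by (elim disjE conjE; simp add: sum_filt sum_prof gu_vals gu_valsS v2_def)
qed

lemma X0st_2: "stable_at 3 S0 gu {1,2,3} X0 [2]"
  unfolding stable_at_def by (auto simp: util_exp gu_vals gu_valsS X0_simps v0_def v1_def v2_def v3_def v12_def v13_def v21_def v23_def v31_def v32_def v123_def v132_def v213_def v231_def v312_def v321_def)

lemma X0ce_3: "X0 [3] \<in> CE_set 3 S0 gu (set [3] \<union> {})"
  unfolding X0_simps
proof (rule CE_intro)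
  show "mkd v3 \<in> dists 3 S0" by (rule mkd_dists) (auto simp: v3_def)
next
  fix p a b :: nat assume h: "p \<in> set [3] \<union> {}" "a \<in> {0::nat,1}" "b \<in> {0::nat,1}" "a \<noteq> b"
  from h(1) have hp: "p = 3" by simp
  from h(2-4) have hab: "(a = 0 \<and> b = 1) \<or> (a = 1 \<and> b = 0)" by auto
  from hp hab show "0 \<le> (\<Sum>s\<in>{s\<in>profiles 3 S0. s p = a}. mkd v3 s * (gu p s - gu p (s(p := b))))"
    by (elim disjE conjE; simp add: sum_filt sum_prof gu_vals gu_valsS v3_def)
qed

lemma X0st_3: "stable_at 3 S0 gu {1,2,3} X0 [3]"
  unfolding stable_at_def by (auto simp: util_exp gu_vals gu_valsS X0_simps v0_def v1_def v2_def v3_def v12_def v13_def v21_def v23_def v31_def v32_def v123_def v132_def v213_def v231_def v312_def v321_def)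

lemma X0ce_12: "X0 [1,2] \<in> CE_set 3 S0 gu (set [1,2] \<union> {})"
  unfolding X0_simps
proof (rule CE_intro)
  show "mkd v12 \<in> dists 3 S0" by (rule mkd_dists) (auto simp: v12_def)
next
  fix p a b :: nat assume h: "p \<in> set [1,2] \<union> {}" "a \<in> {0::nat,1}" "b \<in> {0::nat,1}" "a \<noteq> b"
  from h(1) have hp: "p = 1 \<or> p = 2" by simp
  from h(2-4) have hab: "(a = 0 \<and> b = 1) \<or> (a = 1 \<and> b = 0)" by auto
  from hp hab show "0 \<le> (\<Sum>s\<in>{s\<in>profiles 3 S0. s p = a}. mkd v12 s * (gu p s - gu p (s(p := b))))"
    by (elim disjE conjE; simp add: sum_filt sum_prof gu_vals gu_valsS v12_def)
qed

lemma X0st_12: "stable_at 3 S0 gu {1,2,3} X0 [1,2]"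
  unfolding stable_at_def by (auto simp: util_exp gu_vals gu_valsS X0_simps v0_def v1_def v2_def v3_def v12_def v13_def v21_def v23_def v31_def v32_def v123_def v132_def v213_def v231_def v312_def v321_def)

lemma X0ce_13: "X0 [1,3] \<in> CE_set 3 S0 gu (set [1,3] \<union> {})"
  unfolding X0_simps
proof (rule CE_intro)
  show "mkd v13 \<in> dists 3 S0" by (rule mkd_dists) (auto simp: v13_def)
next
  fix p a b :: nat assume h: "p \<in> set [1,3] \<union> {}" "a \<in> {0::nat,1}" "b \<in> {0::nat,1}" "a \<noteq> b"
  from h(1) have hp: "p = 1 \<or> p = 3" by simp
  from h(2-4) have hab: "(a = 0 \<and> b = 1) \<or> (a = 1 \<and> b = 0)" by auto
  from hp hab show "0 \<le> (\<Sum>s\<in>{s\<in>profiles 3 S0. s p = a}. mkd v13 s * (gu p s - gu p (s(p := b))))"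
    by (elim disjE conjE; simp add: sum_filt sum_prof gu_vals gu_valsS v13_def)
qed

lemma X0st_13: "stable_at 3 S0 gu {1,2,3} X0 [1,3]"
  unfolding stable_at_def by (auto simp: util_exp gu_vals gu_valsS X0_simps v0_def v1_def v2_def v3_def v12_def v13_def v21_def v23_def v31_def v32_def v123_def v132_def v213_def v231_def v312_def v321_def)

lemma X0ce_21: "X0 [2,1] \<in> CE_set 3 S0 gu (set [2,1] \<union> {})"
  unfolding X0_simps
proof (rule CE_intro)
  show "mkd v21 \<in> dists 3 S0" by (rule mkd_dists) (auto simp: v21_def)
next
  fix p a b :: nat assume h: "p \<in> set [2,1] \<union> {}" "a \<in> {0::nat,1}" "b \<in> {0::nat,1}" "a \<noteq> b"
  from h(1) have hp: "p = 2 \<or> p = 1" by simp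
  from h(2-4) have hab: "(a = 0 \<and> b = 1) \<or> (a = 1 \<and> b = 0)" by auto
  from hp hab show "0 \<le> (\<Sum>s\<in>{s\<in>profiles 3 S0. s p = a}. mkd v21 s * (gu p s - gu p (s(p := b))))"
    by (elim disjE conjE; simp add: sum_filt sum_prof gu_vals gu_valsS v21_def)
qed

lemma X0st_21: "stable_at 3 S0 gu {1,2,3} X0 [2,1]"
  unfolding stable_at_def by (auto simp: util_exp gu_vals gu_valsS X0_simps v0_def v1_def v2_def v3_def v12_def v13_def v21_def v23_def v31_def v32_def v123_def v132_def v213_def v231_def v312_def v321_def)

lemma X0ce_23: "X0 [2,3] \<in> CE_set 3 S0 gu (set [2,3] \<union> {})"
  unfolding X0_simps
proof (rule CE_intro)
  show "mkd v23 \<in> dists 3 S0" by (rule mkd_dists) (auto simp: v23_def)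
next
  fix p a b :: nat assume h: "p \<in> set [2,3] \<union> {}" "a \<in> {0::nat,1}" "b \<in> {0::nat,1}" "a \<noteq> b"
  from h(1) have hp: "p = 2 \<or> p = 3" by simp
  from h(2-4) have hab: "(a = 0 \<and> b = 1) \<or> (a = 1 \<and> b = 0)" by auto
  from hp hab show "0 \<le> (\<Sum>s\<in>{s\<in>profiles 3 S0. s p = a}. mkd v23 s * (gu p s - gu p (s(p := b))))"
    by (elim disjE conjE; simp add: sum_filt sum_prof gu_vals gu_valsS v23_def)
qed

lemma X0st_23: "stable_at 3 S0 gu {1,2,3} X0 [2,3]"
  unfolding stable_at_def by (auto simp: util_exp gu_vals gu_valsS X0_simps v0_def v1_def v2_def v3_def v12_def v13_def v21_def v23_def v31_def v32_def v123_def v132_def v213_def v231_def v312_def v321_def)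

lemma X0ce_31: "X0 [3,1] \<in> CE_set 3 S0 gu (set [3,1] \<union> {})"
  unfolding X0_simps
proof (rule CE_intro)
  show "mkd v31 \<in> dists 3 S0" by (rule mkd_dists) (auto simp: v31_def)
next
  fix p a b :: nat assume h: "p \<in> set [3,1] \<union> {}" "a \<in> {0::nat,1}" "b \<in> {0::nat,1}" "a \<noteq> b"
  from h(1) have hp: "p = 3 \<or> p = 1" by simp
  from h(2-4) have hab: "(a = 0 \<and> b = 1) \<or> (a = 1 \<and> b = 0)" by auto
  from hp hab show "0 \<le> (\<Sum>s\<in>{s\<in>profiles 3 S0. s p = a}. mkd v31 s * (gu p s - gu p (s(p := b))))"
    by (elim disjE conjE; simp add: sum_filt sum_prof gu_vals gu_valsS v31_def)
qed

lemma X0st_31: "stable_at 3 S0 gu {1,2,3} X0 [3,1]"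
  unfolding stable_at_def by (auto simp: util_exp gu_vals gu_valsS X0_simps v0_def v1_def v2_def v3_def v12_def v13_def v21_def v23_def v31_def v32_def v123_def v132_def v213_def v231_def v312_def v321_def)

lemma X0ce_32: "X0 [3,2] \<in> CE_set 3 S0 gu (set [3,2] \<union> {})"
  unfolding X0_simps
proof (rule CE_intro)
  show "mkd v32 \<in> dists 3 S0" by (rule mkd_dists) (auto simp: v32_def)
next
  fix p a b :: nat assume h: "p \<in> set [3,2] \<union> {}" "a \<in> {0::nat,1}" "b \<in> {0::nat,1}" "a \<noteq> b"
  from h(1) have hp: "p = 3 \<or> p = 2" by simp
  from h(2-4) have hab: "(a = 0 \<and> b = 1) \<or> (a = 1 \<and> b = 0)" by auto
  from hp hab show "0 \<le> (\<Sum>s\<in>{s\<in>profiles 3 S0. s p = a}. mkd v32 s * (gu p s - gu p (s(p := b))))"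
    by (elim disjE conjE; simp add: sum_filt sum_prof gu_vals gu_valsS v32_def)
qed

lemma X0st_32: "stable_at 3 S0 gu {1,2,3} X0 [3,2]"
  unfolding stable_at_def by (auto simp: util_exp gu_vals gu_valsS X0_simps v0_def v1_def v2_def v3_def v12_def v13_def v21_def v23_def v31_def v32_def v123_def v132_def v213_def v231_def v312_def v321_def)

lemma X0ce_123: "X0 [1,2,3] \<in> CE_set 3 S0 gu (set [1,2,3] \<union> {})"
  unfolding X0_simps
proof (rule CE_intro)
  show "mkd v123 \<in> dists 3 S0" by (rule mkd_dists) (auto simp: v123_def)
next
  fix p a b :: nat assume h: "p \<in> set [1,2,3] \<union> {}" "a \<in> {0::nat,1}" "b \<in> {0::nat,1}" "a \<noteq> b"
  from h(1) have hp: "p = 1 \<or> p = 2 \<or> p = 3" by simp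
  from h(2-4) have hab: "(a = 0 \<and> b = 1) \<or> (a = 1 \<and> b = 0)" by auto
  from hp hab show "0 \<le> (\<Sum>s\<in>{s\<in>profiles 3 S0. s p = a}. mkd v123 s * (gu p s - gu p (s(p := b))))"
    by (elim disjE conjE; simp add: sum_filt sum_prof gu_vals gu_valsS v123_def)
qed

lemma X0st_123: "stable_at 3 S0 gu {1,2,3} X0 [1,2,3]"
  unfolding stable_at_def by (auto simp: util_exp gu_vals gu_valsS X0_simps v0_def v1_def v2_def v3_def v12_def v13_def v21_def v23_def v31_def v32_def v123_def v132_def v213_def v231_def v312_def v321_def)

lemma X0ce_132: "X0 [1,3,2] \<in> CE_set 3 S0 gu (set [1,3,2] \<union> {})"
  unfolding X0_simps
proof (rule CE_intro)
  show "mkd v132 \<in> dists 3 S0" by (rule mkd_dists) (auto simp: v132_def)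
next
  fix p a b :: nat assume h: "p \<in> set [1,3,2] \<union> {}" "a \<in> {0::nat,1}" "b \<in> {0::nat,1}" "a \<noteq> b"
  from h(1) have hp: "p = 1 \<or> p = 3 \<or> p = 2" by simp
  from h(2-4) have hab: "(a = 0 \<and> b = 1) \<or> (a = 1 \<and> b = 0)" by auto
  from hp hab show "0 \<le> (\<Sum>s\<in>{s\<in>profiles 3 S0. s p = a}. mkd v132 s * (gu p s - gu p (s(p := b))))"
    by (elim disjE conjE; simp add: sum_filt sum_prof gu_vals gu_valsS v132_def)
qed

lemma X0st_132: "stable_at 3 S0 gu {1,2,3} X0 [1,3,2]"
  unfolding stable_at_def by (auto simp: util_exp gu_vals gu_valsS X0_simps v0_def v1_def v2_def v3_def v12_def v13_def v21_def v23_def v31_def v32_def v123_def v132_def v213_def v231_def v312_def v321_def)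

lemma X0ce_213: "X0 [2,1,3] \<in> CE_set 3 S0 gu (set [2,1,3] \<union> {})"
  unfolding X0_simps
proof (rule CE_intro)
  show "mkd v213 \<in> dists 3 S0" by (rule mkd_dists) (auto simp: v213_def)
next
  fix p a b :: nat assume h: "p \<in> set [2,1,3] \<union> {}" "a \<in> {0::nat,1}" "b \<in> {0::nat,1}" "a \<noteq> b"
  from h(1) have hp: "p = 2 \<or> p = 1 \<or> p = 3" by simp
  from h(2-4) have hab: "(a = 0 \<and> b = 1) \<or> (a = 1 \<and> b = 0)" by auto
  from hp hab show "0 \<le> (\<Sum>s\<in>{s\<in>profiles 3 S0. s p = a}. mkd v213 s * (gu p s - gu p (s(p := b))))"
    by (elim disjE conjE; simp add: sum_filt sum_prof gu_vals gu_valsS v213_def)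
qed

lemma X0st_213: "stable_at 3 S0 gu {1,2,3} X0 [2,1,3]"
  unfolding stable_at_def by (auto simp: util_exp gu_vals gu_valsS X0_simps v0_def v1_def v2_def v3_def v12_def v13_def v21_def v23_def v31_def v32_def v123_def v132_def v213_def v231_def v312_def v321_def)

lemma X0ce_231: "X0 [2,3,1] \<in> CE_set 3 S0 gu (set [2,3,1] \<union> {})"
  unfolding X0_simps
proof (rule CE_intro)
  show "mkd v231 \<in> dists 3 S0" by (rule mkd_dists) (auto simp: v231_def)
next
  fix p a b :: nat assume h: "p \<in> set [2,3,1] \<union> {}" "a \<in> {0::nat,1}" "b \<in> {0::nat,1}" "a \<noteq> b"
  from h(1) have hp: "p = 2 \<or> p = 3 \<or> p = 1" by simp
  from h(2-4) have hab: "(a = 0 \<and> b = 1) \<or> (a = 1 \<and> b = 0)" by auto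
  from hp hab show "0 \<le> (\<Sum>s\<in>{s\<in>profiles 3 S0. s p = a}. mkd v231 s * (gu p s - gu p (s(p := b))))"
    by (elim disjE conjE; simp add: sum_filt sum_prof gu_vals gu_valsS v231_def)
qed

lemma X0st_231: "stable_at 3 S0 gu {1,2,3} X0 [2,3,1]"
  unfolding stable_at_def by (auto simp: util_exp gu_vals gu_valsS X0_simps v0_def v1_def v2_def v3_def v12_def v13_def v21_def v23_def v31_def v32_def v123_def v132_def v213_def v231_def v312_def v321_def)

lemma X0ce_312: "X0 [3,1,2] \<in> CE_set 3 S0 gu (set [3,1,2] \<union> {})"
  unfolding X0_simps
proof (rule CE_intro)
  show "mkd v312 \<in> dists 3 S0" by (rule mkd_dists) (auto simp: v312_def)
next
  fix p a b :: nat assume h: "p \<in> set [3,1,2] \<union> {}" "a \<in> {0::nat,1}" "b \<in> {0::nat,1}" "a \<noteq> b"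
  from h(1) have hp: "p = 3 \<or> p = 1 \<or> p = 2" by simp
  from h(2-4) have hab: "(a = 0 \<and> b = 1) \<or> (a = 1 \<and> b = 0)" by auto
  from hp hab show "0 \<le> (\<Sum>s\<in>{s\<in>profiles 3 S0. s p = a}. mkd v312 s * (gu p s - gu p (s(p := b))))"
    by (elim disjE conjE; simp add: sum_filt sum_prof gu_vals gu_valsS v312_def)
qed

lemma X0st_312: "stable_at 3 S0 gu {1,2,3} X0 [3,1,2]"
  unfolding stable_at_def by (auto simp: util_exp gu_vals gu_valsS X0_simps v0_def v1_def v2_def v3_def v12_def v13_def v21_def v23_def v31_def v32_def v123_def v132_def v213_def v231_def v312_def v321_def)

lemma X0ce_321: "X0 [3,2,1] \<in> CE_set 3 S0 gu (set [3,2,1] \<union> {})"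
  unfolding X0_simps
proof (rule CE_intro)
  show "mkd v321 \<in> dists 3 S0" by (rule mkd_dists) (auto simp: v321_def)
next
  fix p a b :: nat assume h: "p \<in> set [3,2,1] \<union> {}" "a \<in> {0::nat,1}" "b \<in> {0::nat,1}" "a \<noteq> b"
  from h(1) have hp: "p = 3 \<or> p = 2 \<or> p = 1" by simp
  from h(2-4) have hab: "(a = 0 \<and> b = 1) \<or> (a = 1 \<and> b = 0)" by auto
  from hp hab show "0 \<le> (\<Sum>s\<in>{s\<in>profiles 3 S0. s p = a}. mkd v321 s * (gu p s - gu p (s(p := b))))"
    by (elim disjE conjE; simp add: sum_filt sum_prof gu_vals gu_valsS v321_def)
qed

lemma X0st_321: "stable_at 3 S0 gu {1,2,3} X0 [3,2,1]"
  unfolding stable_at_def by (auto simp: util_exp gu_vals gu_valsS X0_simps v0_def v1_def v2_def v3_def v12_def v13_def v21_def v23_def v31_def v32_def v123_def v132_def v213_def v231_def v312_def v321_def)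

lemma X0_PS: "X0 \<in> perfectly_stable 3 S0 gu {1,2,3} {}"
  unfolding perfectly_stable_def XX_def OS_eq
proof (intro CollectI conjI ballI)
  fix \<pi> assume "\<pi> \<in> OS"
  then show "X0 \<pi> \<in> CE_set 3 S0 gu (set \<pi> \<union> {})" unfolding OS_def insert_iff empty_iff
    by (elim disjE; simp only: X0ce_0 X0ce_1 X0ce_2 X0ce_3 X0ce_12 X0ce_13 X0ce_21 X0ce_23 X0ce_31 X0ce_32 X0ce_123 X0ce_132 X0ce_213 X0ce_231 X0ce_312 X0ce_321)
next
  fix \<pi> assume "\<pi> \<in> OS"
  then show "stable_at 3 S0 gu {1,2,3} X0 \<pi>" unfolding OS_def insert_iff empty_iff
    by (elim disjE; simp only: X0st_0 X0st_1 X0st_2 X0st_3 X0st_12 X0st_13 X0st_21 X0st_23 X0st_31 X0st_32 X0st_123 X0st_132 X0st_213 X0st_231 X0st_312 X0st_321)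
qed

lemma X0_utils: "util 3 S0 gu 1 (X0 []) = (13/140)" "util 3 S0 gu 2 (X0 []) = 1" "util 3 S0 gu 3 (X0 []) = (1921/560)"
  by (simp_all add: util_exp gu_vals gu_valsS X0_simps v0_def)

lemma X0_pareto: "X0 [] \<in> pareto_opt 3 S0 gu {1,2,3} (perfectly_stable 3 S0 gu {1,2,3} {}) []"
  unfolding pareto_opt_def
proof (intro CollectI conjI)
  show "X0 [] \<in> (\<lambda>X. X []) ` perfectly_stable 3 S0 gu {1,2,3} {}" using X0_PS by blast
  show "\<not> (\<exists>y'\<in>(\<lambda>X. X []) ` perfectly_stable 3 S0 gu {1,2,3} {}.
        (\<forall>p\<in>{1,2,3} - set []. util 3 S0 gu p (X0 []) \<le> util 3 S0 gu p y') \<and>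
        (\<exists>p\<in>{1,2,3} - set []. util 3 S0 gu p (X0 []) < util 3 S0 gu p y'))"
  proof
    assume "\<exists>y'\<in>(\<lambda>X. X []) ` perfectly_stable 3 S0 gu {1,2,3} {}.
        (\<forall>p\<in>{1,2,3} - set []. util 3 S0 gu p (X0 []) \<le> util 3 S0 gu p y') \<and>
        (\<exists>p\<in>{1,2,3} - set []. util 3 S0 gu p (X0 []) < util 3 S0 gu p y')"
    then obtain Z where Z: "Z \<in> perfectly_stable 3 S0 gu {1,2,3} {}"
      and le: "\<forall>p\<in>{1,2,3}. util 3 S0 gu p (X0 []) \<le> util 3 S0 gu p (Z [])"
      and lt: "\<exists>p\<in>{1,2,3}. util 3 S0 gu p (X0 []) < util 3 S0 gu p (Z [])" by auto
    have b: "1 * util 3 S0 gu 1 (Z []) + 1 * util 3 S0 gu 2 (Z []) + 4 * util 3 S0 gu 3 (Z []) \<le> (1037/70)"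
      by (rule pareto_bound[OF Z])
    from le have l1: "(13/140) \<le> util 3 S0 gu 1 (Z [])" "1 \<le> util 3 S0 gu 2 (Z [])" "(1921/560) \<le> util 3 S0 gu 3 (Z [])"
      by (simp_all add: X0_utils)
    from lt have "(13/140) < util 3 S0 gu 1 (Z []) \<or> 1 < util 3 S0 gu 2 (Z []) \<or> (1921/560) < util 3 S0 gu 3 (Z [])"
      by (simp add: X0_utils)
    then show False using b l1 by linarith
  qed
qed

lemma no_sym: "\<not> (\<exists>X'\<in>SCE_PA 3 S0 gu {1,2,3} {}. X' [] = X0 [] \<and>
          (\<forall>\<pi>\<in>ordered_subsets {1,2,3}. \<forall>\<pi>'\<in>ordered_subsets {1,2,3}. set \<pi> = set \<pi>' \<longrightarrow> X' \<pi> = X' \<pi>'))"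
proof
  assume "\<exists>X'\<in>SCE_PA 3 S0 gu {1,2,3} {}. X' [] = X0 [] \<and>
          (\<forall>\<pi>\<in>ordered_subsets {1,2,3}. \<forall>\<pi>'\<in>ordered_subsets {1,2,3}. set \<pi> = set \<pi>' \<longrightarrow> X' \<pi> = X' \<pi>')"
  then obtain X' where H: "X' \<in> perfectly_stable 3 S0 gu {1,2,3} {}" and h0: "X' [] = X0 []"
    and hs: "\<forall>\<pi>\<in>OS. \<forall>\<pi>'\<in>OS. set \<pi> = set \<pi>' \<longrightarrow> X' \<pi> = X' \<pi>'"
    unfolding SCE_PA_def OS_eq by blast
  have m21: "[2,1] \<in> OS" "[1,2] \<in> OS" by (simp_all add: OS_def)
  have s21: "set [2,1] = set [1::nat,2]" by auto
  have eq21: "X' [2,1] = X' [1,2]" using hs m21 s21 by blast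

  have fix_0: "X' [] (mk 0 0 0) = 0" using h0 by (simp add: X0_simps v0_def)
  have fix_1: "X' [] (mk 0 0 1) = 0" using h0 by (simp add: X0_simps v0_def)
  have fix_2: "X' [] (mk 0 1 0) = (241/1120)" using h0 by (simp add: X0_simps v0_def)
  have fix_3: "X' [] (mk 0 1 1) = 0" using h0 by (simp add: X0_simps v0_def)
  have fix_4: "X' [] (mk 1 0 0) = 0" using h0 by (simp add: X0_simps v0_def)
  have fix_5: "X' [] (mk 1 0 1) = 0" using h0 by (simp add: X0_simps v0_def)
  have fix_6: "X' [] (mk 1 1 0) = (13/280)" using h0 by (simp add: X0_simps v0_def)
  have fix_7: "X' [] (mk 1 1 1) = (827/1120)" using h0 by (simp add: X0_simps v0_def)
  have nce1: "X' [1] \<in> CE_set 3 S0 gu {1}" using PS_CE[OF H, of "[1]"] by (simp add: OS_def)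
  note nce1d = CE_dist[OF nce1]
  have nce2: "X' [2] \<in> CE_set 3 S0 gu {2}" using PS_CE[OF H, of "[2]"] by (simp add: OS_def)
  note nce2d = CE_dist[OF nce2]
  have nce12: "X' [1,2] \<in> CE_set 3 S0 gu {1,2}" using PS_CE[OF H, of "[1,2]"] by (simp add: OS_def)
  note nce12d = CE_dist[OF nce12]
  have nce13: "X' [1,3] \<in> CE_set 3 S0 gu {1,3}" using PS_CE[OF H, of "[1,3]"] by (simp add: OS_def)
  note nce13d = CE_dist[OF nce13]
  have nce1_101: "0 \<le> 0 * X' [1] (mk 0 0 0) + 1 * X' [1] (mk 0 0 1) + (-2) * X' [1] (mk 0 1 0) + 0 * X' [1] (mk 0 1 1)" using CE_inst[OF nce1, of 1 0 1] by (simp add: sum_filt sum_prof gu_vals gu_valsS)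
  have nce1_110: "0 \<le> 0 * X' [1] (mk 1 0 0) + (-1) * X' [1] (mk 1 0 1) + 2 * X' [1] (mk 1 1 0) + 0 * X' [1] (mk 1 1 1)" using CE_inst[OF nce1, of 1 1 0] by (simp add: sum_filt sum_prof gu_vals gu_valsS)
  have nce2_201: "0 \<le> (-3) * X' [2] (mk 0 0 0) + 3 * X' [2] (mk 0 0 1) + (-1) * X' [2] (mk 1 0 0) + 1 * X' [2] (mk 1 0 1)" using CE_inst[OF nce2, of 2 0 1] by (simp add: sum_filt sum_prof gu_vals gu_valsS)
  have nce2_210: "0 \<le> 3 * X' [2] (mk 0 1 0) + (-3) * X' [2] (mk 0 1 1) + 1 * X' [2] (mk 1 1 0) + (-1) * X' [2] (mk 1 1 1)" using CE_inst[OF nce2, of 2 1 0] by (simp add: sum_filt sum_prof gu_vals gu_valsS)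
  have nce12_101: "0 \<le> 0 * X' [1,2] (mk 0 0 0) + 1 * X' [1,2] (mk 0 0 1) + (-2) * X' [1,2] (mk 0 1 0) + 0 * X' [1,2] (mk 0 1 1)" using CE_inst[OF nce12, of 1 0 1] by (simp add: sum_filt sum_prof gu_vals gu_valsS)
  have nce12_110: "0 \<le> 0 * X' [1,2] (mk 1 0 0) + (-1) * X' [1,2] (mk 1 0 1) + 2 * X' [1,2] (mk 1 1 0) + 0 * X' [1,2] (mk 1 1 1)" using CE_inst[OF nce12, of 1 1 0] by (simp add: sum_filt sum_prof gu_vals gu_valsS)
  have nce12_210: "0 \<le> 3 * X' [1,2] (mk 0 1 0) + (-3) * X' [1,2] (mk 0 1 1) + 1 * X' [1,2] (mk 1 1 0) + (-1) * X' [1,2] (mk 1 1 1)" using CE_inst[OF nce12, of 2 1 0] by (simp add: sum_filt sum_prof gu_vals gu_valsS)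
  have nce13_310: "0 \<le> 0 * X' [1,3] (mk 0 0 1) + (-2) * X' [1,3] (mk 0 1 1) + 0 * X' [1,3] (mk 1 0 1) + 3 * X' [1,3] (mk 1 1 1)" using CE_inst[OF nce13, of 3 1 0] by (simp add: sum_filt sum_prof gu_vals gu_valsS)
  have nst0_1: "0 \<le> (X' [] (mk 0 0 0) * 2 + X' [] (mk 0 0 1) * 1 + X' [] (mk 0 1 0) * 0 + X' [] (mk 0 1 1) * 0 + X' [] (mk 1 0 0) * 2 + X' [] (mk 1 0 1) * 0 + X' [] (mk 1 1 0) * 2 + X' [] (mk 1 1 1) * 0) - (X' [1] (mk 0 0 0) * 2 + X' [1] (mk 0 0 1) * 1 + X' [1] (mk 0 1 0) * 0 + X' [1] (mk 0 1 1) * 0 + X' [1] (mk 1 0 0) * 2 + X' [1] (mk 1 0 1) * 0 + X' [1] (mk 1 1 0) * 2 + X' [1] (mk 1 1 1) * 0)" using PS_st[OF H, of "[]" 1] eq21 by (simp add: OS_def util_exp gu_vals gu_valsS)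
  have nst0_2: "0 \<le> (X' [] (mk 0 0 0) * 1 + X' [] (mk 0 0 1) * 4 + X' [] (mk 0 1 0) * 4 + X' [] (mk 0 1 1) * 1 + X' [] (mk 1 0 0) * 2 + X' [] (mk 1 0 1) * 1 + X' [] (mk 1 1 0) * 3 + X' [] (mk 1 1 1) * 0) - (X' [2] (mk 0 0 0) * 1 + X' [2] (mk 0 0 1) * 4 + X' [2] (mk 0 1 0) * 4 + X' [2] (mk 0 1 1) * 1 + X' [2] (mk 1 0 0) * 2 + X' [2] (mk 1 0 1) * 1 + X' [2] (mk 1 1 0) * 3 + X' [2] (mk 1 1 1) * 0)" using PS_st[OF H, of "[]" 2] eq21 by (simp add: OS_def util_exp gu_vals gu_valsS)
  have nst1_2: "0 \<le> (X' [1] (mk 0 0 0) * 1 + X' [1] (mk 0 0 1) * 4 + X' [1] (mk 0 1 0) * 4 + X' [1] (mk 0 1 1) * 1 + X' [1] (mk 1 0 0) * 2 + X' [1] (mk 1 0 1) * 1 + X' [1] (mk 1 1 0) * 3 + X' [1] (mk 1 1 1) * 0) - (X' [1,2] (mk 0 0 0) * 1 + X' [1,2] (mk 0 0 1) * 4 + X' [1,2] (mk 0 1 0) * 4 + X' [1,2] (mk 0 1 1) * 1 + X' [1,2] (mk 1 0 0) * 2 + X' [1,2] (mk 1 0 1) * 1 + X' [1,2] (mk 1 1 0) * 3 + X' [1,2] (mk 1 1 1) * 0)" using PS_st[OF H, of "[1]" 2] eq21 by (simp add: OS_def util_exp gu_vals gu_valsS)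
  have nst1_3: "0 \<le> (X' [1] (mk 0 0 0) * 1 + X' [1] (mk 0 0 1) * 1 + X' [1] (mk 0 1 0) * 2 + X' [1] (mk 0 1 1) * 0 + X' [1] (mk 1 0 0) * 1 + X' [1] (mk 1 0 1) * 1 + X' [1] (mk 1 1 0) * 1 + X' [1] (mk 1 1 1) * 4) - (X' [1,3] (mk 0 0 0) * 1 + X' [1,3] (mk 0 0 1) * 1 + X' [1,3] (mk 0 1 0) * 2 + X' [1,3] (mk 0 1 1) * 0 + X' [1,3] (mk 1 0 0) * 1 + X' [1,3] (mk 1 0 1) * 1 + X' [1,3] (mk 1 1 0) * 1 + X' [1,3] (mk 1 1 1) * 4)" using PS_st[OF H, of "[1]" 3] eq21 by (simp add: OS_def util_exp gu_vals gu_valsS)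
  have nst2_1: "0 \<le> (X' [2] (mk 0 0 0) * 2 + X' [2] (mk 0 0 1) * 1 + X' [2] (mk 0 1 0) * 0 + X' [2] (mk 0 1 1) * 0 + X' [2] (mk 1 0 0) * 2 + X' [2] (mk 1 0 1) * 0 + X' [2] (mk 1 1 0) * 2 + X' [2] (mk 1 1 1) * 0) - (X' [1,2] (mk 0 0 0) * 2 + X' [1,2] (mk 0 0 1) * 1 + X' [1,2] (mk 0 1 0) * 0 + X' [1,2] (mk 0 1 1) * 0 + X' [1,2] (mk 1 0 0) * 2 + X' [1,2] (mk 1 0 1) * 0 + X' [1,2] (mk 1 1 0) * 2 + X' [1,2] (mk 1 1 1) * 0)" using PS_st[OF H, of "[2]" 1] eq21 by (simp add: OS_def util_exp gu_vals gu_valsS)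
  have nonneg: "0 \<le> 0 + 49 * (0 * X' [1] (mk 0 0 0) + 1 * X' [1] (mk 0 0 1) + (-2) * X' [1] (mk 0 1 0) + 0 * X' [1] (mk 0 1 1)) + (217/2) * (0 * X' [1] (mk 1 0 0) + (-1) * X' [1] (mk 1 0 1) + 2 * X' [1] (mk 1 1 0) + 0 * X' [1] (mk 1 1 1)) + 63 * ((-3) * X' [2] (mk 0 0 0) + 3 * X' [2] (mk 0 0 1) + (-1) * X' [2] (mk 1 0 0) + 1 * X' [2] (mk 1 0 1)) + 63 * (3 * X' [2] (mk 0 1 0) + (-3) * X' [2] (mk 0 1 1) + 1 * X' [2] (mk 1 1 0) + (-1) * X' [2] (mk 1 1 1)) + 140 * (0 * X' [1,2] (mk 0 0 0) + 1 * X' [1,2] (mk 0 0 1) + (-2) * X' [1,2] (mk 0 1 0) + 0 * X' [1,2] (mk 0 1 1)) + 70 * (0 * X' [1,2] (mk 1 0 0) + (-1) * X' [1,2] (mk 1 0 1) + 2 * X' [1,2] (mk 1 1 0) + 0 * X' [1,2] (mk 1 1 1)) + 98 * (3 * X' [1,2] (mk 0 1 0) + (-3) * X' [1,2] (mk 0 1 1) + 1 * X' [1,2] (mk 1 1 0) + (-1) * X' [1,2] (mk 1 1 1)) + 7 * (0 * X' [1,3] (mk 0 0 1) + (-2) * X' [1,3] (mk 0 1 1) + 0 * X' [1,3] (mk 1 0 1) + 3 * X' [1,3] (mk 1 1 1)) + 140 * ((X' [] (mk 0 0 0) * 2 + X' [] (mk 0 0 1) * 1 + X' [] (mk 0 1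 0) * 0 + X' [] (mk 0 1 1) * 0 + X' [] (mk 1 0 0) * 2 + X' [] (mk 1 0 1) * 0 + X' [] (mk 1 1 0) * 2 + X' [] (mk 1 1 1) * 0) - (X' [1] (mk 0 0 0) * 2 + X' [1] (mk 0 0 1) * 1 + X' [1] (mk 0 1 0) * 0 + X' [1] (mk 0 1 1) * 0 + X' [1] (mk 1 0 0) * 2 + X' [1] (mk 1 0 1) * 0 + X' [1] (mk 1 1 0) * 2 + X' [1] (mk 1 1 1) * 0)) + 126 * ((X' [] (mk 0 0 0) * 1 + X' [] (mk 0 0 1) * 4 + X' [] (mk 0 1 0) * 4 + X' [] (mk 0 1 1) * 1 + X' [] (mk 1 0 0) * 2 + X' [] (mk 1 0 1) * 1 + X' [] (mk 1 1 0) * 3 + X' [] (mk 1 1 1) * 0) - (X' [2] (mk 0 0 0) * 1 + X' [2] (mk 0 0 1) * 4 + X' [2] (mk 0 1 0) * 4 + X' [2] (mk 0 1 1) * 1 + X' [2] (mk 1 0 0) * 2 + X' [2] (mk 1 0 1) * 1 + X' [2] (mk 1 1 0) * 3 + X' [2] (mk 1 1 1) * 0)) + 28 * ((X' [1] (mk 0 0 0) * 1 + X' [1] (mk 0 0 1) * 4 + X' [1] (mk 0 1 0) * 4 + X' [1] (mk 0 1 1) * 1 + X' [1] (mk 1 0 0) * 2 + X' [1] (mk 1 0 1) * 1 + X' [1] (mk 1 1 0) * 3 + X' [1] (mk 1 1 1) * 0) - (X' [1,2] (mk 0 0 0) * 1 + X' [1,2] (mk 0 0 1) * 4 + X' [1,2]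 (mk 0 1 0) * 4 + X' [1,2] (mk 0 1 1) * 1 + X' [1,2] (mk 1 0 0) * 2 + X' [1,2] (mk 1 0 1) * 1 + X' [1,2] (mk 1 1 0) * 3 + X' [1,2] (mk 1 1 1) * 0)) + 7 * ((X' [1] (mk 0 0 0) * 1 + X' [1] (mk 0 0 1) * 1 + X' [1] (mk 0 1 0) * 2 + X' [1] (mk 0 1 1) * 0 + X' [1] (mk 1 0 0) * 1 + X' [1] (mk 1 0 1) * 1 + X' [1] (mk 1 1 0) * 1 + X' [1] (mk 1 1 1) * 4) - (X' [1,3] (mk 0 0 0) * 1 + X' [1,3] (mk 0 0 1) * 1 + X' [1,3] (mk 0 1 0) * 2 + X' [1,3] (mk 0 1 1) * 0 + X' [1,3] (mk 1 0 0) * 1 + X' [1,3] (mk 1 0 1) * 1 + X' [1,3] (mk 1 1 0) * 1 + X' [1,3] (mk 1 1 1) * 4)) + 126 * ((X' [2] (mk 0 0 0) * 2 + X' [2] (mk 0 0 1) * 1 + X' [2] (mk 0 1 0) * 0 + X' [2] (mk 0 1 1) * 0 + X' [2] (mk 1 0 0) * 2 + X' [2] (mk 1 0 1) * 0 + X' [2] (mk 1 1 0) * 2 + X' [2] (mk 1 1 1) * 0) - (X' [1,2] (mk 0 0 0) * 2 + X' [1,2] (mk 0 0 1) * 1 + X' [1,2] (mk 0 1 0) * 0 + X' [1,2] (mk 0 1 1) * 0 + X' [1,2] (mk 1 0 0) * 2 + X' [1,2] (mk 1 0 1) * 0 + X' [1,2] (mk 1 1 0) * 2 + X' [1,2] (mk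 1 1 1) * 0)) + 273 * (X' [1] (mk 0 0 0)) + 245 * (X' [1] (mk 1 0 0)) + (203/2) * (X' [1] (mk 1 0 1)) + 126 * (X' [2] (mk 0 0 1)) + 252 * (X' [2] (mk 0 1 0)) + 252 * (X' [2] (mk 0 1 1)) + 182 * (X' [1,2] (mk 0 0 0)) + 224 * (X' [1,2] (mk 0 1 1)) + 210 * (X' [1,2] (mk 1 0 0)) + 7 * (X' [1,3] (mk 0 1 0)) + 7 * (X' [1,3] (mk 0 1 1))" by (rule lin_sum[OF lin_sum[OF lin_sum[OF lin_sum[OF lin_sum[OF lin_sum[OF lin_sum[OF lin_sum[OF lin_sum[OF lin_sum[OF lin_sum[OF lin_sum[OF lin_sum[OF lin_sum[OF lin_sum[OF lin_sum[OF lin_sum[OF lin_sum[OF lin_sum[OF lin_sum[OF lin_sum[OF lin_sum[OF lin_sum[OF lin_sum[OF order_refl nce1_101] nce1_110] nce2_201] nce2_210] nce12_101] nce12_110] nce12_210] nce13_310] nst0_1] nst0_2] nst1_2] nst1_3] nst2_1] nce1d(1)] nce1d(5)] nce1d(6)] nce2d(2)] nce2d(3)] nce2d(4)] nce12d(1)] nce12d(4)] nce12d(5)] nce13d(3)] nce13d(4)]) simp_all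
  show False using nonneg nce1d(9) nce2d(9) nce12d(9) nce13d(9) fix_0 fix_1 fix_2 fix_3 fix_4 fix_5 fix_6 unfolding distrib_left right_diff_distrib mult.assoc[symmetric] by linarith
qed

theorem mainTheorem9:
  shows "\<exists>n S u L F X.
     is_finite_game n S \<and> L \<union> F = players n \<and> L \<inter> F = {} \<and>
     X \<in> SCE_PA n S u L F \<and>
     \<not> (\<exists>X'\<in>SCE_PA n S u L F. X' [] = X [] \<and>
          (\<forall>\<pi>\<in>ordered_subsets L. \<forall>\<pi>'\<in>ordered_subsets L. set \<pi> = set \<pi>' \<longrightarrow> X' \<pi> = X' \<pi>'))"
proof -
  have g: "is_finite_game 3 S0" by (simp add: is_finite_game_def players_def S0_def)
  have p: "{1,2,3} \<union> {} = players 3" by (auto simp: players_def)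
  have x: "X0 \<in> SCE_PA 3 S0 gu {1,2,3} {}" unfolding SCE_PA_def using X0_PS X0_pareto by blast
  show ?thesis using g p x no_sym by blast
qed

end
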